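(* Assume (A1) and let $\zeta\in\{\mu,\nu\}$. Then for every probability measure $\mathfrak p$ on $\mathbb R^d$ with $\mathcal H(\mathfrak p|\zeta)<\infty$, $$M_1(\mathfrak p)\le M_1(\zeta)+C_1(\zeta)\sqrt{\mathcal H(\mathfrak p|\zeta)},\qquad M_2(\mathfrak p)\le M_2(\zeta)+C_2(\zeta)\Big(\sqrt{\mathcal H(\mathfrak p|\zeta)}+\frac{\mathcal H(\mathfrak p|\zeta)}{2}\Big),$$ where $$C_1(\zeta):=\inf_{\sigma\in(0,\alpha_\zeta/2)}\Big(\frac2\sigma+\frac2\sigma\log\int e^{\sigma|x|^2}d\zeta\Big)^{1/2},\qquad C_2(\zeta):=\inf_{\sigma\in(0,\alpha_\zeta/2)}\Big(\frac3\sigma+\frac2\sigma\int e^{\sigma|x|^2}d\zeta\Big).$$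
   Context: $M_k(\zeta):=\int|x|^k\zeta(dx)$; $\mathcal H(\mathfrak p|\zeta)$ is the relative entropy. For differentiable $U:\mathbb R^d\to\mathbb R$ and $r>0$, $\kappa_U(r):=\inf\{\langle\nabla U(x)-\nabla U(y),x-y\rangle/|x-y|^2: |x-y|=r\}$. $\mathcal G$: the set of $g\in C^2((0,\infty),[0,\infty))$ with $r\mapsto r^{1/2}g(r^{1/2})$ non-decreasing and concave and $\lim_{r\downarrow0}rg(r)=0$; $\tilde{\mathcal G}$: bounded $g\in\mathcal G$ with $\lim_{r\downarrow0}g(r)=0$, $g'\ge0$, $2g''+gg'\le0$. (A1): $\mu(dx)=e^{-U_\mu(x)}dx$, $\nu(dx)=e^{-U_\nu(x)}dx$ probability measures on $\mathbb R^d$, $U_\mu,U_\nu\in C^2(\mathbb R^d)$, $\int\log(d\mu/dx)d\mu<\infty$, $\int\log(d\nu/dx)d\nu<\infty$, and there exist $\alpha_\mu,\alpha_\nu>0$, $\tilde g_\mu,\tilde g_\nu\in\tilde{\mathcal G}$ with $\kappa_{U_\mu}(r)\ge\alpha_\mu-r^{-1}\tilde g_\mu(r)$ and $\kappa_{U_\nu}(r)\ge\alpha_\nu-r^{-1}\tilde g_\nu(r)$ for all $r>0$. *)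

theory Defs
  imports "HOL-Probability.Probability"
begin

definition moment :: "nat \<Rightarrow> 'a::euclidean_space measure \<Rightarrow> ennreal" where
  "moment k \<zeta> = (\<integral>\<^sup>+ x. ennreal (norm x ^ k) \<partial>\<zeta>)"

definition rel_entropy :: "'a measure \<Rightarrow> 'a measure \<Rightarrow> ereal" where
  "rel_entropy p \<zeta> =
     (if absolutely_continuous \<zeta> p \<and> integrable p (\<lambda>x. ln (enn2real (RN_deriv \<zeta> p x)))
      then ereal (\<integral> x. ln (enn2real (RN_deriv \<zeta> p x)) \<partial>p) else \<infinity>)"

definition C2_with_grad :: "('a::euclidean_space \<Rightarrow> real) \<Rightarrow> ('a \<Rightarrow> 'a) \<Rightarrow> bool" where
  "C2_with_grad U gradU \<longleftrightarrow>
     (\<forall>x. (U has_derivative (\<lambda>h. gradU x \<bullet> h)) (at x)) \<and>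
     (\<exists>D2 :: 'a \<Rightarrow> ('a \<Rightarrow>\<^sub>L 'a). (\<forall>x. (gradU has_derivative blinfun_apply (D2 x)) (at x))
        \<and> continuous_on UNIV D2)"

definition kappa :: "('a::euclidean_space \<Rightarrow> 'a) \<Rightarrow> real \<Rightarrow> ereal" where
  "kappa gradU r = (INF xy \<in> {(x, y). norm (x - y) = r}.
      ereal (((gradU (fst xy) - gradU (snd xy)) \<bullet> (fst xy - snd xy)) / (norm (fst xy - snd xy))^2))"

definition class_G :: "(real \<Rightarrow> real) \<Rightarrow> bool" where
  "class_G g \<longleftrightarrow>
     (\<exists>g1 g2. (\<forall>r>0. (g has_real_derivative g1 r) (at r) \<and> (g1 has_real_derivative g2 r) (at r))
        \<and> continuous_on {0<..} g2) \<and>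
     (\<forall>r>0. g r \<ge> 0) \<and>
     mono_on {0<..} (\<lambda>r. sqrt r * g (sqrt r)) \<and>
     concave_on {0<..} (\<lambda>r. sqrt r * g (sqrt r)) \<and>
     ((\<lambda>r. r * g r) \<longlongrightarrow> 0) (at_right 0)"

definition class_G_tilde :: "(real \<Rightarrow> real) \<Rightarrow> bool" where
  "class_G_tilde g \<longleftrightarrow>
     class_G g \<and> bounded (g ` {0<..}) \<and> (g \<longlongrightarrow> 0) (at_right 0) \<and>
     (\<forall>r>0. deriv g r \<ge> 0 \<and> 2 * deriv (deriv g) r + g r * deriv g r \<le> 0)"

definition A1_measure :: "'a::euclidean_space measure \<Rightarrow> ('a \<Rightarrow> real) \<Rightarrow> real \<Rightarrow> bool" where
  "A1_measure \<zeta> U \<alpha> \<longleftrightarrow>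
     \<zeta> = density lborel (\<lambda>x. ennreal (exp (- U x))) \<and> prob_space \<zeta> \<and>
     (\<exists>gradU. C2_with_grad U gradU \<and>
        (\<exists>g. class_G_tilde g \<and> (\<forall>r>0. ereal (\<alpha> - g r / r) \<le> kappa gradU r))) \<and>
     (\<integral>\<^sup>+ x. ennreal (- U x) \<partial>\<zeta>) < \<infinity> \<and> \<alpha> > 0"

definition exp_moment :: "'a::euclidean_space measure \<Rightarrow> real \<Rightarrow> ennreal" where
  "exp_moment \<zeta> \<sigma> = (\<integral>\<^sup>+ x. ennreal (exp (\<sigma> * (norm x)^2)) \<partial>\<zeta>)"

definition C1 :: "'a::euclidean_space measure \<Rightarrow> real \<Rightarrow> ennreal" where
  "C1 \<zeta> \<alpha> = (INF \<sigma> \<in> {0<..<\<alpha>/2}.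
      (if exp_moment \<zeta> \<sigma> = \<infinity> then \<infinity>
       else ennreal (sqrt (2/\<sigma> + 2/\<sigma> * ln (enn2real (exp_moment \<zeta> \<sigma>))))))"

definition C2 :: "'a::euclidean_space measure \<Rightarrow> real \<Rightarrow> ennreal" where
  "C2 \<zeta> \<alpha> = (INF \<sigma> \<in> {0<..<\<alpha>/2}. ennreal (3/\<sigma>) + ennreal (2/\<sigma>) * exp_moment \<zeta> \<sigma>)"

end

theory Submission
  imports Defs
begin

lemma fenchel:
  fixes x y :: real assumes "0 \<le> x"
  shows "x * y \<le> x * ln x - x + exp y"
proof (cases "x = 0")
  case True then show ?thesis by simp
next
  case False
  then have xp: "x > 0" using assms by simp
  have "1 + (y - ln x) \<le> exp (y - ln x)" by (rule exp_ge_add_one_self)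
  also have "\<dots> = exp y / x" using xp by (simp add: exp_diff)
  finally have "x * (1 + (y - ln x)) \<le> exp y" using xp by (simp add: field_simps)
  then show ?thesis by (simp add: algebra_simps)
qed

lemma G_ineq:
  fixes x :: real assumes "0 < x"
  shows "(x - 1) * ((x + 1) * ln x - 2 * (x - 1)) \<ge> 0"
proof -
  define G where "G = (\<lambda>x::real. (x + 1) * ln x - 2 * (x - 1))"
  have D: "\<And>z. z > 0 \<Longrightarrow> DERIV G z :> (ln z + 1/z - 1)"
    unfolding G_def
    by (auto intro!: derivative_eq_intros simp: field_simps)
  have Dnn: "ln z + 1/z - 1 \<ge> 0" if "z > 0" for z :: real
  proof -
    have "ln (1/z) \<le> 1/z - 1" using \<open>z>0\<close> by (intro ln_le_minus_one) simp
    then show ?thesis using \<open>z>0\<close> by (simp add: ln_div)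
  qed
  have "G 1 = 0" unfolding G_def by simp
  consider "x = 1" | "x > 1" | "x < 1" by linarith
  then show ?thesis
  proof cases
    case 1 then show ?thesis by simp
  next
    case 2
    obtain z where "1 < z" "z < x" "G x - G 1 = (x - 1) * (ln z + 1/z - 1)"
      using MVT2[of 1 x G "\<lambda>z. ln z + 1/z - 1"] 2 D by auto
    then have "G x \<ge> 0" using Dnn[of z] \<open>G 1 = 0\<close> 2 by simp
    then show ?thesis using 2 unfolding G_def by simp
  next
    case 3
    obtain z where "x < z" "z < 1" "G 1 - G x = (1 - x) * (ln z + 1/z - 1)"
      using MVT2[of x 1 G "\<lambda>z. ln z + 1/z - 1"] 3 D assms by auto
    then have "G x \<le> 0" using Dnn[of z] \<open>G 1 = 0\<close> 3 assms by (smt (verit) mult_nonneg_nonneg)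
    then show ?thesis using 3 unfolding G_def by (simp add: mult_nonpos_nonpos)
  qed
qed

lemma pinsker_pt:
  fixes x :: real assumes "0 \<le> x"
  shows "3 * (x - 1)^2 \<le> 2 * (x + 2) * (x * ln x - x + 1)"
proof (cases "x = 0")
  case True then show ?thesis by simp
next
  case False
  then have xp: "x > 0" using assms by simp
  define F where "F = (\<lambda>x::real. 2 * (x + 2) * (x * ln x - x + 1) - 3 * (x - 1)^2)"
  have D: "\<And>z. z > 0 \<Longrightarrow> DERIV F z :> 4 * ((z + 1) * ln z - 2 * (z - 1))"
    unfolding F_def
    by (auto intro!: derivative_eq_intros simp: field_simps power2_eq_square)
  have "F 1 = 0" unfolding F_def by simp
  consider "x = 1" | "x > 1" | "x < 1" by linarith
  then have "F x \<ge> 0"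
  proof cases
    case 1 then show ?thesis using \<open>F 1 = 0\<close> by simp
  next
    case 2
    obtain z where z: "1 < z" "z < x" "F x - F 1 = (x - 1) * (4 * ((z + 1) * ln z - 2 * (z - 1)))"
      using MVT2[of 1 x F "\<lambda>z. 4 * ((z + 1) * ln z - 2 * (z - 1))"] 2 D by auto
    have "(z - 1) * ((z + 1) * ln z - 2 * (z - 1)) \<ge> 0" using G_ineq[of z] z by simp
    then have "(z + 1) * ln z - 2 * (z - 1) \<ge> 0" using z by (simp add: zero_le_mult_iff)
    then show ?thesis using z \<open>F 1 = 0\<close> 2 by simp
  next
    case 3
    obtain z where z: "x < z" "z < 1" "F 1 - F x = (1 - x) * (4 * ((z + 1) * ln z - 2 * (z - 1)))"
      using MVT2[of x 1 F "\<lambda>z. 4 * ((z + 1) * ln z - 2 * (z - 1))"] 3 D xp by auto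
    have "(z - 1) * ((z + 1) * ln z - 2 * (z - 1)) \<ge> 0" using G_ineq[of z] z xp by simp
    then have "(z + 1) * ln z - 2 * (z - 1) \<le> 0" using z by (simp add: zero_le_mult_iff)
    then have "F 1 - F x \<le> 0" using z 3 by (simp add: mult_nonneg_nonpos)
    then show ?thesis using \<open>F 1 = 0\<close> by simp
  qed
  then show ?thesis unfolding F_def by simp
qed

lemma exp_taylor2:
  fixes y :: real assumes "0 \<le> y"
  shows "exp y \<le> 1 + y + y^2 * exp y / 2"
proof -
  obtain t where t: "\<bar>t\<bar> \<le> \<bar>y\<bar>" "exp y = (\<Sum>m<2. (y ^ m) / fact m) + (exp t / fact 2) * y ^ 2"
    using Maclaurin_exp_le[of y 2] by blast
  have "exp t \<le> exp y" using t(1) assms by simp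
  then have "(exp t / 2) * y^2 \<le> (exp y / 2) * y^2" by (intro mult_right_mono) auto
  moreover have "exp y = 1 + y + (exp t / 2) * y^2" using t(2) by (simp add: numeral_2_eq_2)
  moreover have "(exp y / 2) * y^2 = y^2 * exp y / 2" by simp
  ultimately show ?thesis by linarith
qed

lemma exp_taylor_mix:
  fixes \<psi> l :: real assumes "0 \<le> \<psi>" "0 \<le> l" "l \<le> 1/2"
  shows "exp (l * \<psi>) \<le> 1 + l * \<psi> + 4 * l^2 * exp \<psi>"
proof -
  have a: "exp (l*\<psi>) \<le> 1 + l*\<psi> + (l*\<psi>)^2 * exp (l*\<psi>) / 2"
    using exp_taylor2[of "l*\<psi>"] assms by simp
  have b: "\<psi>^2 \<le> 8 * exp (\<psi>/2)"
    using exp_lower_Taylor_quadratic[of "\<psi>/2"] assms by (simp add: power_divide)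
  have "l*\<psi> \<le> (1/2)*\<psi>" using assms by (intro mult_right_mono) auto
  then have c: "exp (l*\<psi>) \<le> exp (\<psi>/2)" by simp
  have "(l*\<psi>)^2 * exp (l*\<psi>) / 2 = l^2 * (\<psi>^2 * exp (l*\<psi>)) / 2" by (simp add: power_mult_distrib)
  also have "\<dots> \<le> l^2 * (8 * exp (\<psi>/2) * exp (\<psi>/2)) / 2"
    using b c by (intro divide_right_mono mult_left_mono mult_mono) auto
  also have "\<dots> = 4 * l^2 * (exp (\<psi>/2) * exp (\<psi>/2))" by simp
  also have "\<dots> = 4 * l^2 * exp \<psi>" by (simp flip: exp_add)
  finally show ?thesis using a by simp
qed

lemma pins2:
  fixes x \<psi> t :: real assumes x: "0 \<le> x" and p: "0 \<le> \<psi>" and t: "t > 0"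
  shows "\<psi> * (x - 1) \<le> t * (x * ln x - x + 1) + \<psi>^2 * (x + 2) / (6*t)"
proof -
  define g where "g = x * ln x - x + 1"
  define w where "w = x + 2"
  have w: "w > 0" unfolding w_def using x by simp
  have P: "3 * (x - 1)^2 \<le> 2 * w * g" unfolding g_def w_def by (rule pinsker_pt[OF x])
  have sq: "0 \<le> (3*t*(x - 1) - \<psi>*w)^2" by simp
  have c1: "6*t*w*(\<psi>*(x-1)) \<le> 9*t^2*(x-1)^2 + \<psi>^2*w^2"
    using sq by (simp add: power2_eq_square algebra_simps)
  have c2': "3*t^2*(3*(x-1)^2) \<le> 3*t^2*(2*w*g)" by (rule mult_left_mono[OF P]) simp
  have c2'': "9*t^2*(x-1)^2 = 3*t^2*(3*(x-1)^2)" by simp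
  have c2: "9*t^2*(x-1)^2 \<le> 3*t^2*(2*w*g)" using c2' c2'' by linarith
  have eq: "6*t*w*(t*g + \<psi>^2*w/(6*t)) = 3*t^2*(2*w*g) + \<psi>^2*w^2"
    using t by (simp add: field_simps power2_eq_square)
  have "6*t*w*(\<psi>*(x-1)) \<le> 6*t*w*(t*g + \<psi>^2*w/(6*t))" using c1 c2 eq by linarith
  then have "\<psi>*(x-1) \<le> t*g + \<psi>^2*w/(6*t)" using t w by (simp add: mult_le_cancel_left_pos)
  then show ?thesis unfolding g_def w_def .
qed


lemma amgm_opt:
  fixes a b :: real assumes "a > 0" "b > 0"
  shows "sqrt (b/a) > 0 \<and> sqrt (b/a) * a + b / sqrt (b/a) = 2 * sqrt (a*b)"
proof -
  have s: "sqrt (b/a) * a = sqrt (a*b)"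
  proof -
    have "sqrt a * sqrt a = a" using assms by simp
    then have "sqrt (b/a) * a = sqrt (b/a) * sqrt a * sqrt a" by (metis mult.assoc)
    also have "\<dots> = sqrt (b/a * a * a)" by (simp only: real_sqrt_mult)
    also have "b/a * a * a = a * b" using assms by simp
    finally show ?thesis .
  qed
  have "b / sqrt (b/a) = sqrt (a*b)"
  proof -
    have "sqrt (b/a) * sqrt (a*b) = sqrt (b/a * (a*b))" by (simp only: real_sqrt_mult)
    also have "b/a * (a*b) = b^2" using assms by (simp add: power2_eq_square)
    then have "sqrt (b/a * (a*b)) = b" using assms by simp
    finally have "sqrt (b/a) * sqrt (a*b) = b" .
    then show ?thesis using assms by (simp add: field_simps)
  qed
  then show ?thesis using s assms by simp
qed

lemma sqrt4: "sqrt (4 * y) = 2 * sqrt (y::real)"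
proof -
  have "sqrt (4::real) = 2" using real_sqrt_abs[of "2::real"] by simp
  then show ?thesis by (simp add: real_sqrt_mult)
qed

lemma R1:
  fixes X m H L \<sigma> :: real
  assumes "\<sigma> > 0" "H \<ge> 0" "L \<ge> 0" "m \<ge> 0"
    and a: "\<And>l. l > 0 \<Longrightarrow> X \<le> (H + L)/l + l/(4*\<sigma>)"
    and b: "\<And>t. t > 0 \<Longrightarrow> X - m \<le> t*H + (H + 3*L)/(6*\<sigma>*t)"
  shows "X - m \<le> sqrt (2/\<sigma> + 2/\<sigma>*L) * sqrt H"
proof -
  define Q where "Q = (2/\<sigma> + 2/\<sigma>*L) * H"
  have Q: "sqrt (2/\<sigma> + 2/\<sigma>*L) * sqrt H = sqrt Q" unfolding Q_def by (simp add: real_sqrt_mult)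
  have Q0: "Q \<ge> 0" unfolding Q_def using assms(1-4) by simp
  show ?thesis
  proof (cases "H = 0")
    case True
    have "X - m \<le> 0"
    proof (rule ccontr)
      assume "\<not> X - m \<le> 0"
      then have pos: "X - m > 0" by simp
      show False
      proof (cases "L = 0")
        case True
        then show False using b[of 1] \<open>H = 0\<close> pos by simp
      next
        case False
        then have Lp: "L > 0" using assms(1-4) by simp
        define t where "t = L / (\<sigma> * (X - m))"
        have tp: "t > 0" unfolding t_def using Lp pos assms(1-4) by simp
        have "X - m \<le> (3*L)/(6*\<sigma>*t)" using b[OF tp] True by simp
        also have "\<dots> = (X - m)/2" unfolding t_def using Lp pos assms(1-4) by (simp add: field_simps)
        finally show False using pos by simp
      qed
    qed
    moreover have "0 \<le> sqrt Q" using Q0 by simp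
    ultimately show ?thesis unfolding Q by linarith
  next
    case False
    then have Hp: "H > 0" using assms(1-4) by simp
    show ?thesis
    proof (cases "L \<le> H * (1 + 2*L)")
      case True
      have ap: "1/(4*\<sigma>) > 0" "H + L > 0" using assms(1-4) Hp by auto
      from amgm_opt[OF ap] obtain l where l: "l > 0" "l * (1/(4*\<sigma>)) + (H+L)/l = 2 * sqrt (1/(4*\<sigma>) * (H+L))"
        by blast
      have "X \<le> (H + L)/l + l/(4*\<sigma>)" using a[OF l(1)] .
      also have "\<dots> = sqrt (4 * (1/(4*\<sigma>) * (H+L)))" using l(2) unfolding sqrt4 by (simp add: algebra_simps)
      also have "\<dots> \<le> sqrt Q"
      proof (rule real_sqrt_le_mono)
        have "4 * (1/(4*\<sigma>) * (H+L)) = (H + L)/\<sigma>" using assms(1-4) by (simp add: field_simps)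
        also have "\<dots> \<le> (2*H + 2*L*H)/\<sigma>" using True assms(1-4) by (intro divide_right_mono) (auto simp: algebra_simps)
        also have "\<dots> = Q" unfolding Q_def using assms(1-4) by (simp add: field_simps)
        finally show "4 * (1/(4*\<sigma>) * (H+L)) \<le> Q" .
      qed
      finally show ?thesis using Q assms(1-4) by simp
    next
      case False
      then have Lp: "L > 0" using Hp assms(1-4) by (smt (verit) mult_nonneg_nonneg)
      have H3: "H \<le> 3"
      proof -
        have "H * (1 + 2*L) < L" using False by simp
        moreover have "L \<le> 3 * (1 + 2*L)" using assms(1-4) by simp
        ultimately have "H * (1 + 2*L) < 3 * (1 + 2*L)" by simp
        moreover have "1 + 2*L > 0" using assms(1-4) by simp
        ultimately have "H < 3" using mult_less_cancel_right_pos[of "1+2*L" H 3] by blast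
        then show ?thesis by simp
      qed
      have bp: "H > 0" "(H + 3*L)/(6*\<sigma>) > 0" using Hp Lp assms(1-4) by auto
      from amgm_opt[OF bp] obtain t where t: "t > 0" "t * H + (H + 3*L)/(6*\<sigma>)/t = 2 * sqrt (H * ((H + 3*L)/(6*\<sigma>)))"
        by blast
      have "X - m \<le> t*H + (H + 3*L)/(6*\<sigma>*t)" using b[OF t(1)] .
      also have "\<dots> = sqrt (4 * (H * ((H + 3*L)/(6*\<sigma>))))" using t(2) unfolding sqrt4 by (simp add: algebra_simps)
      also have "\<dots> \<le> sqrt Q"
      proof (rule real_sqrt_le_mono)
        have "4 * (H * ((H + 3*L)/(6*\<sigma>))) = H * (2 * (H + 3*L)/(3*\<sigma>))" using assms(1-4) by (simp add: field_simps)
        also have "\<dots> \<le> H * ((2 + 2*L)/\<sigma>)"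
          using H3 assms(1-4) Hp by (intro mult_left_mono) (auto simp: field_simps)
        also have "\<dots> = Q" unfolding Q_def using assms(1-4) by (simp add: field_simps)
        finally show "4 * (H * ((H + 3*L)/(6*\<sigma>))) \<le> Q" .
      qed
      finally show ?thesis using Q by simp
    qed
  qed
qed

lemma R2:
  fixes X m H E :: real
  assumes "H \<ge> 0" "m \<ge> 0" "E \<ge> 1"
    and i: "\<And>l. 0 < l \<Longrightarrow> l \<le> 1/2 \<Longrightarrow> l * X \<le> H + l * m + 4 * l^2 * E"
    and ii: "X \<le> H + ln E"
  shows "X - m \<le> (3 + 2*E) * (sqrt H + H/2)"
proof -
  have i': "X - m \<le> H/l + 4*l*E" if "0 < l" "l \<le> 1/2" for l
  proof -
    have "l * (X - m) \<le> l * (H/l + 4*l*E)" using i[OF that] that by (simp add: algebra_simps power2_eq_square)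
    then show ?thesis using that by simp
  qed
  have E0: "E > 0" using assms(1-3) by simp
  consider "H = 0" | "0 < H" "H \<le> E" | "H > E" using assms(1-3) by linarith
  then show ?thesis
  proof cases
    case 1
    have "X - m \<le> 0"
    proof (rule ccontr)
      assume "\<not> X - m \<le> 0"
      then have pos: "X - m > 0" by simp
      define l where "l = min (1/2) ((X - m)/(8*E))"
      have lp: "l > 0" "l \<le> 1/2" unfolding l_def using pos E0 by auto
      have "X - m \<le> 4*l*E" using i'[OF lp] 1 by simp
      also have "\<dots> \<le> 4*((X - m)/(8*E))*E" unfolding l_def using E0 by (intro mult_right_mono mult_left_mono) auto
      also have "\<dots> = (X - m)/2" using E0 by simp
      finally show False using pos by simp
    qed
    moreover have "0 \<le> (3 + 2*E) * (sqrt H + H/2)" using assms(1-3) 1 by simp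
    ultimately show ?thesis by linarith
  next
    case 2
    have ap: "4*E > 0" "H > 0" using 2 E0 by auto
    from amgm_opt[OF ap] obtain l where l: "l > 0" "l * (4*E) + H/l = 2 * sqrt (4*E*H)" "l = sqrt (H/(4*E))"
      by blast
    have l2: "l \<le> 1/2"
    proof -
      have "H/(4*E) \<le> 1/4" using 2 E0 by (simp add: field_simps)
      then have "sqrt (H/(4*E)) \<le> sqrt (1/4)" by (rule real_sqrt_le_mono)
      moreover have "sqrt (1/4::real) = 1/2" by (simp add: real_sqrt_divide)
      ultimately show ?thesis using l(3) by simp
    qed
    have "X - m \<le> H/l + 4*l*E" using i'[OF l(1) l2] .
    also have "\<dots> = 4 * sqrt E * sqrt H" using l(2) by (simp add: real_sqrt_mult algebra_simps)
    also have "\<dots> \<le> (3 + 2*E) * sqrt H"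
    proof (rule mult_right_mono)
      have "0 \<le> 2 * (sqrt E - 1)^2 + 1" by simp
      also have "\<dots> = 2 * (sqrt E)^2 - 4 * sqrt E + 3" by (simp add: power2_eq_square algebra_simps)
      also have "\<dots> = 2 * E - 4 * sqrt E + 3" using E0 by simp
      finally show "4 * sqrt E \<le> 3 + 2*E" by simp
    qed (use assms(1-3) in simp)
    also have "\<dots> \<le> (3 + 2*E) * (sqrt H + H/2)" using assms(1-3) by (intro mult_left_mono) auto
    finally show ?thesis .
  next
    case 3
    have sH: "sqrt H \<ge> 1" using 3 assms(1-3) by simp
    have "ln E \<le> E - 1" using E0 by (rule ln_le_minus_one)
    then have "X - m \<le> H + E" using ii assms(1-3) by simp
    also have "\<dots> \<le> 2*E * sqrt H + 3 * (H/2)"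
    proof -
      have "2*E * 1 \<le> 2*E * sqrt H" using sH E0 by (intro mult_left_mono) auto
      then show ?thesis using assms(1-3) E0 by linarith
    qed
    also have "\<dots> \<le> (3 + 2*E) * (sqrt H + H/2)"
    proof -
      have eq: "(3 + 2*E) * (sqrt H + H/2) = 2*E * sqrt H + 3 * (H/2) + (3 * sqrt H + E * H)"
        by (simp add: distrib_left distrib_right)
      have "0 \<le> 3 * sqrt H + E * H" using assms(1-3) E0 by simp
      then show ?thesis unfolding eq by linarith
    qed
    finally show ?thesis .
  qed
qed


locale ent = prob_space M for M :: "'a measure" +
  fixes h :: "'a \<Rightarrow> real"
  assumes hm[measurable]: "h \<in> borel_measurable M"
    and hnn: "\<And>x. 0 \<le> h x"
    and hint: "integrable M h"
    and h1: "(\<integral>x. h x \<partial>M) = 1"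
    and hl: "integrable M (\<lambda>x. h x * ln (h x))"
begin

definition Hh where "Hh = (\<integral>x. h x * ln (h x) \<partial>M)"

lemma P1: "measure M (space M) = 1"
  using emeasure_space_1 by (simp add: measure_eq_emeasure_eq_ennreal)

lemma int_const: "(\<integral>x. c \<partial>M) = (c::real)"
  by (simp add: P1)

lemma int_bdd:
  fixes f :: "'a \<Rightarrow> real"
  assumes [measurable]: "f \<in> borel_measurable M" and "\<And>x. \<bar>f x\<bar> \<le> B"
  shows "integrable M f"
proof (rule Bochner_Integration.integrable_bound[OF integrable_const[of B]])
  show "f \<in> borel_measurable M" by measurable
  show "AE x in M. norm (f x) \<le> norm B"
  proof (rule AE_I2)
    fix x show "norm (f x) \<le> norm B" using assms(2)[of x] by simp
  qed
qed

lemma int_hbdd: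
  fixes f :: "'a \<Rightarrow> real"
  assumes [measurable]: "f \<in> borel_measurable M" and b: "\<And>x. \<bar>f x\<bar> \<le> B"
  shows "integrable M (\<lambda>x. h x * f x)"
proof (rule Bochner_Integration.integrable_bound[of M "\<lambda>x. B * h x"])
  show "integrable M (\<lambda>x. B * h x)" using hint by simp
  show "(\<lambda>x. h x * f x) \<in> borel_measurable M" by measurable
  show "AE x in M. norm (h x * f x) \<le> norm (B * h x)"
  proof (rule AE_I2)
    fix x
    have "\<bar>h x * f x\<bar> = h x * \<bar>f x\<bar>" using hnn[of x] by (simp add: abs_mult)
    also have "\<dots> \<le> h x * B" using b[of x] hnn[of x] by (intro mult_left_mono) auto
    also have "\<dots> \<le> \<bar>B * h x\<bar>" by (simp add: mult.commute)
    finally show "norm (h x * f x) \<le> norm (B * h x)" by simp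
  qed
qed

lemma DV:
  fixes f :: "'a \<Rightarrow> real"
  assumes fm[measurable]: "f \<in> borel_measurable M" and b: "\<And>x. \<bar>f x\<bar> \<le> B"
  shows "(\<integral>x. h x * f x \<partial>M) \<le> Hh + ln (\<integral>x. exp (f x) \<partial>M)"
proof -
  define Z where "Z = (\<integral>x. exp (f x) \<partial>M)"
  have eb: "\<bar>exp (f x)\<bar> \<le> exp B" for x using b[of x] by simp
  have ie: "integrable M (\<lambda>x. exp (f x))" by (rule int_bdd[OF _ eb]) measurable
  have "(\<integral>x. exp (-B) \<partial>M) \<le> Z" unfolding Z_def
  proof (rule integral_mono[OF _ ie])
    show "integrable M (\<lambda>x. exp (-B))" by simp
    show "exp (-B) \<le> exp (f x)" for x using b[of x] by (simp add: abs_le_iff)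
  qed
  then have Zp: "Z > 0" by (simp add: P1) (smt (verit) exp_gt_zero)
  define c where "c = ln Z"
  have pt: "h x * (f x - c) \<le> h x * ln (h x) - h x + exp (f x) / Z" for x
    using fenchel[OF hnn[of x], of "f x - c"] Zp by (simp add: c_def exp_diff)
  have i1: "integrable M (\<lambda>x. h x * (f x - c))"
  proof (rule int_hbdd[where B="B + \<bar>c\<bar>"])
    show "(\<lambda>x. f x - c) \<in> borel_measurable M" by measurable
    show "\<bar>f x - c\<bar> \<le> B + \<bar>c\<bar>" for x using b[of x] by (auto simp: abs_le_iff abs_if split: if_splits)
  qed
  have i2: "integrable M (\<lambda>x. h x * ln (h x) - h x + exp (f x) / Z)"
    using hl hint ie by auto
  have "(\<integral>x. h x * (f x - c) \<partial>M) \<le> (\<integral>x. h x * ln (h x) - h x + exp (f x) / Z \<partial>M)"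
    by (rule integral_mono[OF i1 i2 pt])
  also have "\<dots> = Hh - 1 + Z / Z"
    using hl hint ie unfolding Hh_def Z_def by (simp add: h1 P1)
  also have "\<dots> = Hh" using Zp by simp
  finally have 1: "(\<integral>x. h x * (f x - c) \<partial>M) \<le> Hh" .
  have ihf: "integrable M (\<lambda>x. h x * f x)" by (rule int_hbdd[OF _ b]) measurable
  have "(\<integral>x. h x * (f x - c) \<partial>M) = (\<integral>x. h x * f x - c * h x \<partial>M)"
    by (simp add: algebra_simps)
  also have "\<dots> = (\<integral>x. h x * f x \<partial>M) - c"
    using ihf hint by (simp add: h1)
  finally show ?thesis using 1 unfolding c_def Z_def by simp
qed

lemma Hh_nonneg: "Hh \<ge> 0"
proof -
  have "(\<integral>x. h x - 1 \<partial>M) \<le> (\<integral>x. h x * ln (h x) \<partial>M)"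
  proof (rule integral_mono)
    show "integrable M (\<lambda>x. h x - 1)" using hint by simp
    show "integrable M (\<lambda>x. h x * ln (h x))" using hl .
    fix x
    show "h x - 1 \<le> h x * ln (h x)" using fenchel[OF hnn[of x], of 0] by simp
  qed
  moreover have "(\<integral>x. h x - 1 \<partial>M) = 0" using hint by (simp add: h1 P1)
  ultimately show ?thesis unfolding Hh_def by simp
qed

lemma int_g: "(\<integral>x. h x * ln (h x) - h x + 1 \<partial>M) = Hh"
  using hl hint unfolding Hh_def by (simp add: h1 P1)

lemma Hh0_AE: assumes "Hh = 0" shows "AE x in M. h x = 1"
proof -
  have ig: "integrable M (\<lambda>x. h x * ln (h x) - h x + 1)" using hl hint by simp
  have gnn: "0 \<le> h x * ln (h x) - h x + 1" for x using fenchel[OF hnn[of x], of 0] by simp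
  have "AE x in M. h x * ln (h x) - h x + 1 = 0"
    using integral_nonneg_eq_0_iff_AE[OF ig] gnn int_g assms by simp
  then show ?thesis
  proof (rule eventually_mono)
    fix x assume "h x * ln (h x) - h x + 1 = 0"
    then have "3 * (h x - 1)^2 \<le> 0" using pinsker_pt[OF hnn[of x]] by simp
    then show "h x = 1" by simp
  qed
qed

lemma pins_int:
  fixes \<phi> :: "'a \<Rightarrow> real"
  assumes [measurable]: "\<phi> \<in> borel_measurable M" and b: "\<And>x. 0 \<le> \<phi> x \<and> \<phi> x \<le> N" and t: "t > 0"
  shows "(\<integral>x. h x * \<phi> x \<partial>M) - (\<integral>x. \<phi> x \<partial>M)
           \<le> t * Hh + ((\<integral>x. h x * (\<phi> x)^2 \<partial>M) + 2 * (\<integral>x. (\<phi> x)^2 \<partial>M)) / (6*t)"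
proof -
  have b1: "\<bar>\<phi> x\<bar> \<le> N" for x using b[of x] by simp
  have b2: "\<bar>(\<phi> x)^2\<bar> \<le> N^2" for x using b[of x] by (simp add: power_mono)
  have i1: "integrable M (\<lambda>x. h x * \<phi> x)" by (rule int_hbdd[OF _ b1]) measurable
  have i2: "integrable M \<phi>" by (rule int_bdd[OF _ b1]) measurable
  have i3: "integrable M (\<lambda>x. h x * (\<phi> x)^2)" by (rule int_hbdd[OF _ b2]) measurable
  have i4: "integrable M (\<lambda>x. (\<phi> x)^2)" by (rule int_bdd[OF _ b2]) measurable
  have ig: "integrable M (\<lambda>x. h x * ln (h x) - h x + 1)" using hl hint by simp
  have pt: "h x * \<phi> x - \<phi> x \<le> t * (h x * ln (h x) - h x + 1) + (h x * (\<phi> x)^2 + 2 * (\<phi> x)^2) / (6*t)" for x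
    using pins2[OF hnn[of x] _ t, of "\<phi> x"] b[of x] by (simp add: algebra_simps)
  have "(\<integral>x. h x * \<phi> x - \<phi> x \<partial>M) \<le>
        (\<integral>x. t * (h x * ln (h x) - h x + 1) + (h x * (\<phi> x)^2 + 2 * (\<phi> x)^2) / (6*t) \<partial>M)"
    by (rule integral_mono[OF _ _ pt]) (use i1 i2 i3 i4 ig in auto)
  also have "\<dots> = t * Hh + ((\<integral>x. h x * (\<phi> x)^2 \<partial>M) + 2 * (\<integral>x. (\<phi> x)^2 \<partial>M)) / (6*t)"
    using i3 i4 ig by (simp add: int_g)
  finally show ?thesis using i1 i2 by simp
qed

end

lemma (in prob_space) jensen_exp:
  fixes f :: "'a \<Rightarrow> real"
  assumes fm[measurable]: "f \<in> borel_measurable M" and b: "\<And>x. \<bar>f x\<bar> \<le> B"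
  shows "(\<integral>x. f x \<partial>M) \<le> ln (\<integral>x. exp (f x) \<partial>M)"
proof -
  have P1: "measure M (space M) = 1"
    using emeasure_space_1 by (simp add: measure_eq_emeasure_eq_ennreal)
  interpret e: ent M "\<lambda>_. 1"
    by unfold_locales (auto simp: P1)
  have "e.Hh = 0" unfolding e.Hh_def by simp
  then show ?thesis using e.DV[OF fm b] by simp
qed

context ent
begin

lemma M1_bdd:
  fixes \<phi> :: "'a \<Rightarrow> real"
  assumes [measurable]: "\<phi> \<in> borel_measurable M" and b: "\<And>x. 0 \<le> \<phi> x \<and> \<phi> x \<le> N" and s: "\<sigma> > 0"
  shows "(\<integral>x. h x * \<phi> x \<partial>M) - (\<integral>x. \<phi> x \<partial>M)
           \<le> sqrt (2/\<sigma> + 2/\<sigma> * ln (\<integral>x. exp (\<sigma> * (\<phi> x)^2) \<partial>M)) * sqrt Hh"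
proof -
  define E where "E = (\<integral>x. exp (\<sigma> * (\<phi> x)^2) \<partial>M)"
  define L where "L = ln E"
  define X where "X = (\<integral>x. h x * \<phi> x \<partial>M)"
  define m where "m = (\<integral>x. \<phi> x \<partial>M)"
  have b1: "\<bar>\<phi> x\<bar> \<le> N" for x using b[of x] by simp
  have b2: "\<bar>(\<phi> x)^2\<bar> \<le> N^2" for x using b[of x] by (simp add: power_mono)
  have b3: "\<bar>\<sigma> * (\<phi> x)^2\<bar> \<le> \<sigma> * N^2" for x using b2[of x] s by (simp add: abs_mult)
  have i2: "integrable M \<phi>" by (rule int_bdd[OF _ b1]) measurable
  have iE: "integrable M (\<lambda>x. exp (\<sigma> * (\<phi> x)^2))"
    by (rule int_bdd[where B="exp (\<sigma> * N^2)"]) (use b3 in \<open>auto simp: abs_le_iff\<close>)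
  have E1: "E \<ge> 1"
  proof -
    have "(\<integral>x. 1 \<partial>M) \<le> E" unfolding E_def
      by (rule integral_mono[OF _ iE]) (use s in auto)
    then show ?thesis by (simp add: P1)
  qed
  have L0: "L \<ge> 0" unfolding L_def using E1 by simp
  have m0: "m \<ge> 0" unfolding m_def using b by (simp add: integral_nonneg)
  have a: "X \<le> (Hh + L)/l + l/(4*\<sigma>)" if l: "l > 0" for l
  proof -
    have bl: "\<bar>l * \<phi> x\<bar> \<le> l * N" for x using b1[of x] l by (simp add: abs_mult)
    have dv: "(\<integral>x. h x * (l * \<phi> x) \<partial>M) \<le> Hh + ln (\<integral>x. exp (l * \<phi> x) \<partial>M)"
      by (rule DV[OF _ bl]) measurable
    have lx: "(\<integral>x. h x * (l * \<phi> x) \<partial>M) = l * X" unfolding X_def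
      by (simp add: algebra_simps)
    have young: "l * \<phi> x \<le> \<sigma> * (\<phi> x)^2 + l^2/(4*\<sigma>)" for x
    proof -
      have "0 \<le> (2*\<sigma>*\<phi> x - l)^2" by simp
      then have "4*\<sigma>*(l * \<phi> x) \<le> 4*\<sigma>*(\<sigma> * (\<phi> x)^2 + l^2/(4*\<sigma>))"
        using s by (simp add: power2_eq_square algebra_simps)
      then show ?thesis using s by simp
    qed
    have ie1: "integrable M (\<lambda>x. exp (l * \<phi> x))"
      by (rule int_bdd[where B="exp (l*N)"]) (use bl in \<open>auto simp: abs_le_iff\<close>)
    have "(\<integral>x. exp (l * \<phi> x) \<partial>M) \<le> (\<integral>x. exp (l^2/(4*\<sigma>)) * exp (\<sigma> * (\<phi> x)^2) \<partial>M)"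
    proof (rule integral_mono[OF ie1])
      show "integrable M (\<lambda>x. exp (l^2/(4*\<sigma>)) * exp (\<sigma> * (\<phi> x)^2))" using iE by simp
      show "exp (l * \<phi> x) \<le> exp (l^2/(4*\<sigma>)) * exp (\<sigma> * (\<phi> x)^2)" for x
        using young[of x] by (simp flip: exp_add)
    qed
    also have "\<dots> = exp (l^2/(4*\<sigma>)) * E" unfolding E_def by simp
    finally have "ln (\<integral>x. exp (l * \<phi> x) \<partial>M) \<le> ln (exp (l^2/(4*\<sigma>)) * E)"
    proof (rule ln_mono)
      show "0 < (\<integral>x. exp (l * \<phi> x) \<partial>M)"
      proof -
        have "(\<integral>x. 1 \<partial>M) \<le> (\<integral>x. exp (l * \<phi> x) \<partial>M)"
          by (rule integral_mono[OF _ ie1]) (use l b in auto)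
        then show ?thesis by (simp add: P1)
      qed
    qed
    also have "\<dots> = l^2/(4*\<sigma>) + L" unfolding L_def using E1 by (simp add: ln_mult)
    finally have "l * X \<le> Hh + l^2/(4*\<sigma>) + L" using dv lx by simp
    moreover have "l * ((Hh + L)/l + l/(4*\<sigma>)) = Hh + l^2/(4*\<sigma>) + L"
      using l s by (simp add: field_simps power2_eq_square)
    ultimately have "l * X \<le> l * ((Hh + L)/l + l/(4*\<sigma>))" by linarith
    then show ?thesis using l by simp
  qed
  have bb: "X - m \<le> t*Hh + (Hh + 3*L)/(6*\<sigma>*t)" if t: "t > 0" for t
  proof -
    have p: "X - m \<le> t * Hh + ((\<integral>x. h x * (\<phi> x)^2 \<partial>M) + 2 * (\<integral>x. (\<phi> x)^2 \<partial>M)) / (6*t)"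
      unfolding X_def m_def by (rule pins_int[OF _ b t]) measurable
    have d1: "(\<integral>x. h x * (\<sigma> * (\<phi> x)^2) \<partial>M) \<le> Hh + L"
      unfolding L_def E_def by (rule DV[OF _ b3]) measurable
    have d2: "(\<integral>x. \<sigma> * (\<phi> x)^2 \<partial>M) \<le> L"
      unfolding L_def E_def by (rule jensen_exp[OF _ b3]) measurable
    have "\<sigma> * ((\<integral>x. h x * (\<phi> x)^2 \<partial>M) + 2 * (\<integral>x. (\<phi> x)^2 \<partial>M)) \<le> Hh + 3*L"
      using d1 d2 by (simp add: algebra_simps)
    then have "(\<integral>x. h x * (\<phi> x)^2 \<partial>M) + 2 * (\<integral>x. (\<phi> x)^2 \<partial>M) \<le> (Hh + 3*L)/\<sigma>"
      using s by (simp add: field_simps)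
    then have "((\<integral>x. h x * (\<phi> x)^2 \<partial>M) + 2 * (\<integral>x. (\<phi> x)^2 \<partial>M)) / (6*t) \<le> (Hh + 3*L)/\<sigma>/(6*t)"
      using t by (intro divide_right_mono) auto
    then show ?thesis using p by (simp add: mult.commute mult.left_commute)
  qed
  have "X - m \<le> sqrt (2/\<sigma> + 2/\<sigma>*L) * sqrt Hh"
    by (rule R1[OF s Hh_nonneg L0 m0 a bb])
  then show ?thesis unfolding X_def m_def L_def E_def .
qed

lemma M2_bdd:
  fixes \<phi> :: "'a \<Rightarrow> real"
  assumes [measurable]: "\<phi> \<in> borel_measurable M" and b: "\<And>x. 0 \<le> \<phi> x \<and> \<phi> x \<le> N" and s: "\<sigma> > 0"
  shows "(\<integral>x. h x * \<phi> x \<partial>M) - (\<integral>x. \<phi> x \<partial>M)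
           \<le> (3/\<sigma> + 2/\<sigma> * (\<integral>x. exp (\<sigma> * \<phi> x) \<partial>M)) * (sqrt Hh + Hh/2)"
proof -
  define E where "E = (\<integral>x. exp (\<sigma> * \<phi> x) \<partial>M)"
  define X where "X = (\<integral>x. h x * (\<sigma> * \<phi> x) \<partial>M)"
  define m where "m = (\<integral>x. \<sigma> * \<phi> x \<partial>M)"
  have b1: "\<bar>\<phi> x\<bar> \<le> N" for x using b[of x] by simp
  have bs: "\<bar>\<sigma> * \<phi> x\<bar> \<le> \<sigma> * N" for x using b1[of x] s by (simp add: abs_mult)
  have i1: "integrable M (\<lambda>x. h x * \<phi> x)" by (rule int_hbdd[OF _ b1]) measurable
  have i2: "integrable M \<phi>" by (rule int_bdd[OF _ b1]) measurable
  have iE: "integrable M (\<lambda>x. exp (\<sigma> * \<phi> x))"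
    by (rule int_bdd[where B="exp (\<sigma> * N)"]) (use bs in \<open>auto simp: abs_le_iff\<close>)
  have E1: "E \<ge> 1"
  proof -
    have "(\<integral>x. 1 \<partial>M) \<le> E" unfolding E_def
      by (rule integral_mono[OF _ iE]) (use s b in auto)
    then show ?thesis by (simp add: P1)
  qed
  have m0: "m \<ge> 0" unfolding m_def using b s by (simp add: integral_nonneg)
  have i: "l * X \<le> Hh + l * m + 4 * l^2 * E" if l: "0 < l" "l \<le> 1/2" for l
  proof -
    have bl: "\<bar>l * (\<sigma> * \<phi> x)\<bar> \<le> l * (\<sigma> * N)" for x using bs[of x] l by (simp add: abs_mult)
    have dv: "(\<integral>x. h x * (l * (\<sigma> * \<phi> x)) \<partial>M) \<le> Hh + ln (\<integral>x. exp (l * (\<sigma> * \<phi> x)) \<partial>M)"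
      by (rule DV[OF _ bl]) measurable
    have lx: "(\<integral>x. h x * (l * (\<sigma> * \<phi> x)) \<partial>M) = l * X" unfolding X_def
      by (simp add: algebra_simps)
    have ie1: "integrable M (\<lambda>x. exp (l * (\<sigma> * \<phi> x)))"
      by (rule int_bdd[where B="exp (l*(\<sigma>*N))"]) (use bl in \<open>auto simp: abs_le_iff\<close>)
    have "(\<integral>x. exp (l * (\<sigma> * \<phi> x)) \<partial>M) \<le> (\<integral>x. 1 + l * (\<sigma> * \<phi> x) + 4 * l^2 * exp (\<sigma> * \<phi> x) \<partial>M)"
    proof (rule integral_mono[OF ie1])
      show "integrable M (\<lambda>x. 1 + l * (\<sigma> * \<phi> x) + 4 * l^2 * exp (\<sigma> * \<phi> x))" using iE i2 by simp
      show "exp (l * (\<sigma> * \<phi> x)) \<le> 1 + l * (\<sigma> * \<phi> x) + 4 * l^2 * exp (\<sigma> * \<phi> x)" for x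
        using exp_taylor_mix[of "\<sigma> * \<phi> x" l] b[of x] s l by simp
    qed
    also have "\<dots> = 1 + l * m + 4 * l^2 * E" unfolding m_def E_def using iE i2 by (simp add: P1)
    finally have "ln (\<integral>x. exp (l * (\<sigma> * \<phi> x)) \<partial>M) \<le> ln (1 + l * m + 4 * l^2 * E)"
    proof (rule ln_mono)
      show "0 < (\<integral>x. exp (l * (\<sigma> * \<phi> x)) \<partial>M)"
      proof -
        have "(\<integral>x. 1 \<partial>M) \<le> (\<integral>x. exp (l * (\<sigma> * \<phi> x)) \<partial>M)"
          by (rule integral_mono[OF _ ie1]) (use l b s in auto)
        then show ?thesis by (simp add: P1)
      qed
    qed
    also have "\<dots> \<le> l * m + 4 * l^2 * E"
    proof -
      have "0 \<le> l * m + 4 * l^2 * E" using l m0 E1 by simp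
      then show ?thesis using ln_le_minus_one[of "1 + l * m + 4 * l^2 * E"] by simp
    qed
    finally show ?thesis using dv lx by simp
  qed
  have ii: "X \<le> Hh + ln E"
    unfolding X_def E_def by (rule DV[OF _ bs]) measurable
  have "X - m \<le> (3 + 2*E) * (sqrt Hh + Hh/2)"
    by (rule R2[OF Hh_nonneg m0 E1 i ii])
  moreover have "X - m = \<sigma> * ((\<integral>x. h x * \<phi> x \<partial>M) - (\<integral>x. \<phi> x \<partial>M))"
    unfolding X_def m_def by (simp add: algebra_simps)
  moreover have "(3 + 2*E) * (sqrt Hh + Hh/2) = \<sigma> * ((3/\<sigma> + 2/\<sigma> * E) * (sqrt Hh + Hh/2))"
    using s by (simp add: field_simps)
  ultimately have "\<sigma> * ((\<integral>x. h x * \<phi> x \<partial>M) - (\<integral>x. \<phi> x \<partial>M)) \<le> \<sigma> * ((3/\<sigma> + 2/\<sigma> * E) * (sqrt Hh + Hh/2))"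
    by simp
  then show ?thesis unfolding E_def using s by (simp only: mult_le_cancel_left_pos)
qed

end


lemma INF_bound:
  fixes c :: "real \<Rightarrow> ennreal" and a M :: ennreal
  assumes S: "S \<noteq> {}" and b: "\<And>\<sigma>. \<sigma> \<in> S \<Longrightarrow> a \<le> M + c \<sigma> * ennreal s"
  shows "a \<le> M + (INF \<sigma>\<in>S. c \<sigma>) * ennreal s"
proof -
  define g where "g = (\<lambda>y::ennreal. M + ennreal s * y)"
  have mono: "mono g" unfolding g_def by (auto intro!: monoI add_left_mono mult_left_mono)
  have co: "continuous_on UNIV g" unfolding g_def
    by (intro continuous_on_add continuous_on_const ennreal_continuous_on_cmult continuous_on_id) simp
  have cont: "continuous (at_right (Inf (c ` S))) g"
    using co by (simp add: continuous_on_eq_continuous_within continuous_at_imp_continuous_at_within)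
  have "g (Inf (c ` S)) = (INF y\<in>c ` S. g y)"
    by (rule continuous_at_Inf_mono[OF mono cont]) (use S in auto)
  moreover have "a \<le> (INF y\<in>c ` S. g y)"
    using b unfolding g_def by (auto intro!: INF_greatest simp: mult.commute)
  ultimately show ?thesis unfolding g_def by (simp add: mult.commute)
qed

lemma trunc_lim:
  fixes g w :: "'a \<Rightarrow> real"
  assumes [measurable]: "g \<in> borel_measurable M" "w \<in> borel_measurable M"
    and gn: "\<And>x. 0 \<le> g x" and wn: "\<And>x. 0 \<le> w x"
    and bd: "\<And>N::nat. (\<integral>\<^sup>+x. ennreal (w x) * ennreal (min (g x) (real N)) \<partial>M) \<le> B"
  shows "(\<integral>\<^sup>+x. ennreal (w x) * ennreal (g x) \<partial>M) \<le> B"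
proof -
  define f where "f = (\<lambda>N::nat. \<lambda>x. ennreal (w x) * ennreal (min (g x) (real N)))"
  have inc: "incseq f" unfolding f_def
    by (auto simp: incseq_def le_fun_def intro!: mult_left_mono ennreal_leI)
  have fm: "\<And>i. f i \<in> borel_measurable M" unfolding f_def by measurable
  have sup: "(SUP N. f N x) = ennreal (w x) * ennreal (g x)" for x
  proof -
    have "(SUP N. ennreal (min (g x) (real N))) = ennreal (g x)"
    proof (rule antisym)
      show "(SUP N. ennreal (min (g x) (real N))) \<le> ennreal (g x)"
        by (rule SUP_least) (auto intro: ennreal_leI)
      have "min (g x) (real (nat \<lceil>g x\<rceil>)) = g x"
        by (simp add: min_def) linarith
      then show "ennreal (g x) \<le> (SUP N. ennreal (min (g x) (real N)))"
        by (metis (mono_tags) SUP_upper UNIV_I)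
    qed
    then show ?thesis unfolding f_def by (simp add: SUP_mult_left_ennreal[symmetric])
  qed
  have "(\<integral>\<^sup>+x. ennreal (w x) * ennreal (g x) \<partial>M) = (\<integral>\<^sup>+x. (SUP N. f N x) \<partial>M)"
    by (simp add: sup)
  also have "\<dots> = (SUP N. integral\<^sup>N M (f N))"
    by (rule nn_integral_monotone_convergence_SUP[OF inc fm])
  also have "\<dots> \<le> B" using bd unfolding f_def by (auto intro!: SUP_least)
  finally show ?thesis .
qed


lemma enn_step:
  fixes M :: "'a measure" and h \<phi> g :: "'a \<Rightarrow> real"
  assumes e: "ent M h" and [measurable]: "\<phi> \<in> borel_measurable M" "g \<in> borel_measurable M"
    and b: "\<And>x. 0 \<le> \<phi> x \<and> \<phi> x \<le> N" and pg: "\<And>x. \<phi> x \<le> g x"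
    and key: "(\<integral>x. h x * \<phi> x \<partial>M) - (\<integral>x. \<phi> x \<partial>M) \<le> R" and R: "R \<ge> 0"
  shows "(\<integral>\<^sup>+x. ennreal (h x) * ennreal (\<phi> x) \<partial>M) \<le> (\<integral>\<^sup>+x. ennreal (g x) \<partial>M) + ennreal R"
proof -
  interpret ent M h by fact
  have b1: "\<bar>\<phi> x\<bar> \<le> N" for x using b[of x] by simp
  have i1: "integrable M (\<lambda>x. h x * \<phi> x)" by (rule int_hbdd[OF _ b1]) measurable
  have i2: "integrable M \<phi>" by (rule int_bdd[OF _ b1]) measurable
  have "(\<integral>\<^sup>+x. ennreal (h x) * ennreal (\<phi> x) \<partial>M) = (\<integral>\<^sup>+x. ennreal (h x * \<phi> x) \<partial>M)"
    using hnn b by (simp add: ennreal_mult)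
  also have "\<dots> = ennreal (\<integral>x. h x * \<phi> x \<partial>M)"
    by (rule nn_integral_eq_integral[OF i1]) (use hnn b in \<open>auto\<close>)
  also have "\<dots> \<le> ennreal ((\<integral>x. \<phi> x \<partial>M) + R)" using key by (intro ennreal_leI) simp
  also have "\<dots> = ennreal (\<integral>x. \<phi> x \<partial>M) + ennreal R"
    using R b by (intro ennreal_plus) (auto simp: integral_nonneg)
  also have "ennreal (\<integral>x. \<phi> x \<partial>M) = (\<integral>\<^sup>+x. ennreal (\<phi> x) \<partial>M)"
    by (rule nn_integral_eq_integral[OF i2, symmetric]) (use b in auto)
  also have "\<dots> \<le> (\<integral>\<^sup>+x. ennreal (g x) \<partial>M)"
    by (intro nn_integral_mono ennreal_leI pg)
  finally show ?thesis by (simp add: add_right_mono)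
qed

lemma expint_le:
  fixes M :: "'a measure" and h f F :: "'a \<Rightarrow> real"
  assumes e: "ent M h" and [measurable]: "f \<in> borel_measurable M" "F \<in> borel_measurable M"
    and b: "\<And>x. 0 \<le> f x \<and> f x \<le> N" and fF: "\<And>x. f x \<le> F x"
    and fin: "(\<integral>\<^sup>+x. ennreal (exp (F x)) \<partial>M) = ennreal E" and E0: "E \<ge> 0"
  shows "1 \<le> (\<integral>x. exp (f x) \<partial>M) \<and> (\<integral>x. exp (f x) \<partial>M) \<le> E"
proof -
  interpret ent M h by fact
  have bb: "\<bar>exp (f x)\<bar> \<le> exp N" for x using b[of x] by simp
  have ie: "integrable M (\<lambda>x. exp (f x))" by (rule int_bdd[OF _ bb]) measurable
  have "(\<integral>x. 1 \<partial>M) \<le> (\<integral>x. exp (f x) \<partial>M)"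
    by (rule integral_mono[OF _ ie]) (use b in auto)
  then have 1: "1 \<le> (\<integral>x. exp (f x) \<partial>M)" by (simp add: P1)
  have "ennreal (\<integral>x. exp (f x) \<partial>M) = (\<integral>\<^sup>+x. ennreal (exp (f x)) \<partial>M)"
    by (rule nn_integral_eq_integral[OF ie, symmetric]) auto
  also have "\<dots> \<le> (\<integral>\<^sup>+x. ennreal (exp (F x)) \<partial>M)"
    by (intro nn_integral_mono ennreal_leI) (simp add: fF)
  finally have "(\<integral>x. exp (f x) \<partial>M) \<le> E" using fin E0 by simp
  with 1 show ?thesis by simp
qed

lemma M1_enn:
  fixes M :: "'a::euclidean_space measure" and h :: "'a \<Rightarrow> real"
  assumes e: "ent M h" and sM: "sets M = sets borel" and s: "\<sigma> > 0" and fin: "exp_moment M \<sigma> \<noteq> \<infinity>"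
  shows "(\<integral>\<^sup>+x. ennreal (h x) * ennreal (norm x ^ 1) \<partial>M) \<le> moment 1 M +
           ennreal (sqrt (2/\<sigma> + 2/\<sigma> * ln (enn2real (exp_moment M \<sigma>)))) * ennreal (sqrt (ent.Hh M h))"
proof -
  interpret ent M h by fact
  have mb: "f \<in> borel_measurable M" if "f \<in> borel_measurable borel" for f :: "'a \<Rightarrow> real"
  proof -
    have "(borel_measurable M :: ('a \<Rightarrow> real) set) = borel_measurable (borel::'a measure)" by (rule measurable_cong_sets[OF sM refl])
    then show ?thesis using that by simp
  qed
  define E where "E = enn2real (exp_moment M \<sigma>)"
  have EE: "exp_moment M \<sigma> = ennreal E" unfolding E_def using fin by (simp add: less_top)
  have E0: "E \<ge> 0" unfolding E_def by simp
  define c where "c = sqrt (2/\<sigma> + 2/\<sigma> * ln E)"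
  have hm2: "(\<lambda>x::'a. norm x ^ 1) \<in> borel_measurable M" by (rule mb) measurable
  have bound: "(\<integral>\<^sup>+x. ennreal (h x) * ennreal (min (norm x ^ 1) (real N)) \<partial>M) \<le> moment 1 M + ennreal (c * sqrt Hh)" for N :: nat
  proof -
    define \<phi> where "\<phi> = (\<lambda>x::'a. min (norm x ^ 1) (real N))"
    have pm: "\<phi> \<in> borel_measurable M" unfolding \<phi>_def by (rule mb) measurable
    have b: "0 \<le> \<phi> x \<and> \<phi> x \<le> N" for x unfolding \<phi>_def by simp
    have pm2: "(\<lambda>x. \<sigma> * (\<phi> x)^2) \<in> borel_measurable M" using pm by measurable
    have em: "(\<lambda>x::'a. \<sigma> * (norm x)^2) \<in> borel_measurable M" by (rule mb) measurable
    have ex: "1 \<le> (\<integral>x. exp (\<sigma> * (\<phi> x)^2) \<partial>M) \<and> (\<integral>x. exp (\<sigma> * (\<phi> x)^2) \<partial>M) \<le> E"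
    proof (rule expint_le[OF e pm2 em])
      show "0 \<le> \<sigma> * (\<phi> x)^2 \<and> \<sigma> * (\<phi> x)^2 \<le> \<sigma> * N^2" for x
        using b[of x] s by (auto intro: mult_left_mono power_mono)
      show "\<sigma> * (\<phi> x)^2 \<le> \<sigma> * (norm x)^2" for x
        unfolding \<phi>_def using s by (auto intro!: mult_left_mono power_mono)
      show "(\<integral>\<^sup>+x. ennreal (exp (\<sigma> * (norm x)^2)) \<partial>M) = ennreal E"
        using EE unfolding exp_moment_def .
    qed (use E0 in auto)
    have k1: "(\<integral>x. h x * \<phi> x \<partial>M) - (\<integral>x. \<phi> x \<partial>M)
           \<le> sqrt (2/\<sigma> + 2/\<sigma> * ln (\<integral>x. exp (\<sigma> * (\<phi> x)^2) \<partial>M)) * sqrt Hh"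
      by (rule M1_bdd[OF pm b s])
    also have "\<dots> \<le> c * sqrt Hh" unfolding c_def
      using ex s Hh_nonneg by (intro mult_right_mono real_sqrt_le_mono add_left_mono mult_left_mono) auto
    finally have key: "(\<integral>x. h x * \<phi> x \<partial>M) - (\<integral>x. \<phi> x \<partial>M) \<le> c * sqrt Hh" .
    have c0: "c \<ge> 0" unfolding c_def using ex s by simp
    have "(\<integral>\<^sup>+x. ennreal (h x) * ennreal (\<phi> x) \<partial>M) \<le> (\<integral>\<^sup>+x. ennreal (norm x ^ 1) \<partial>M) + ennreal (c * sqrt Hh)"
      by (rule enn_step[OF e pm hm2 b _ key]) (use c0 Hh_nonneg in \<open>auto simp: \<phi>_def\<close>)
    then show ?thesis unfolding \<phi>_def moment_def .
  qed
  have "(\<integral>\<^sup>+x. ennreal (h x) * ennreal (norm x ^ 1) \<partial>M) \<le> moment 1 M + ennreal (c * sqrt Hh)"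
    by (rule trunc_lim[OF hm2 hm _ hnn bound]) simp
  also have "ennreal (c * sqrt Hh) = ennreal c * ennreal (sqrt Hh)"
    using Hh_nonneg by (simp add: ennreal_mult'')
  finally show ?thesis unfolding c_def E_def .
qed

lemma M2_enn:
  fixes M :: "'a::euclidean_space measure" and h :: "'a \<Rightarrow> real"
  assumes e: "ent M h" and sM: "sets M = sets borel" and s: "\<sigma> > 0" and fin: "exp_moment M \<sigma> \<noteq> \<infinity>"
  shows "(\<integral>\<^sup>+x. ennreal (h x) * ennreal (norm x ^ 2) \<partial>M) \<le> moment 2 M +
           ennreal ((3/\<sigma> + 2/\<sigma> * enn2real (exp_moment M \<sigma>)) * (sqrt (ent.Hh M h) + ent.Hh M h / 2))"
proof -
  interpret ent M h by fact
  have mb: "f \<in> borel_measurable M" if "f \<in> borel_measurable borel" for f :: "'a \<Rightarrow> real"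
  proof -
    have "(borel_measurable M :: ('a \<Rightarrow> real) set) = borel_measurable (borel::'a measure)" by (rule measurable_cong_sets[OF sM refl])
    then show ?thesis using that by simp
  qed
  define E where "E = enn2real (exp_moment M \<sigma>)"
  have EE: "exp_moment M \<sigma> = ennreal E" unfolding E_def using fin by (simp add: less_top)
  have E0: "E \<ge> 0" unfolding E_def by simp
  define R where "R = (3/\<sigma> + 2/\<sigma> * E) * (sqrt Hh + Hh/2)"
  have R0: "R \<ge> 0" unfolding R_def using s E0 Hh_nonneg by simp
  have hm2: "(\<lambda>x::'a. norm x ^ 2) \<in> borel_measurable M" by (rule mb) measurable
  have bound: "(\<integral>\<^sup>+x. ennreal (h x) * ennreal (min (norm x ^ 2) (real N)) \<partial>M) \<le> moment 2 M + ennreal R" for N :: nat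
  proof -
    define \<phi> where "\<phi> = (\<lambda>x::'a. min (norm x ^ 2) (real N))"
    have pm: "\<phi> \<in> borel_measurable M" unfolding \<phi>_def by (rule mb) measurable
    have b: "0 \<le> \<phi> x \<and> \<phi> x \<le> N" for x unfolding \<phi>_def by simp
    have pm2: "(\<lambda>x. \<sigma> * \<phi> x) \<in> borel_measurable M" using pm by measurable
    have em: "(\<lambda>x::'a. \<sigma> * (norm x)^2) \<in> borel_measurable M" by (rule mb) measurable
    have ex: "1 \<le> (\<integral>x. exp (\<sigma> * \<phi> x) \<partial>M) \<and> (\<integral>x. exp (\<sigma> * \<phi> x) \<partial>M) \<le> E"
    proof (rule expint_le[OF e pm2 em])
      show "0 \<le> \<sigma> * \<phi> x \<and> \<sigma> * \<phi> x \<le> \<sigma> * N" for x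
        using b[of x] s by (auto intro: mult_left_mono)
      show "\<sigma> * \<phi> x \<le> \<sigma> * (norm x)^2" for x
        unfolding \<phi>_def using s by (auto intro!: mult_left_mono)
      show "(\<integral>\<^sup>+x. ennreal (exp (\<sigma> * (norm x)^2)) \<partial>M) = ennreal E"
        using EE unfolding exp_moment_def .
    qed (use E0 in auto)
    have k1: "(\<integral>x. h x * \<phi> x \<partial>M) - (\<integral>x. \<phi> x \<partial>M)
           \<le> (3/\<sigma> + 2/\<sigma> * (\<integral>x. exp (\<sigma> * \<phi> x) \<partial>M)) * (sqrt Hh + Hh/2)"
      by (rule M2_bdd[OF pm b s])
    also have "\<dots> \<le> R" unfolding R_def
      using ex s Hh_nonneg by (intro mult_right_mono add_left_mono mult_left_mono) auto
    finally have key: "(\<integral>x. h x * \<phi> x \<partial>M) - (\<integral>x. \<phi> x \<partial>M) \<le> R" .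
    have "(\<integral>\<^sup>+x. ennreal (h x) * ennreal (\<phi> x) \<partial>M) \<le> (\<integral>\<^sup>+x. ennreal (norm x ^ 2) \<partial>M) + ennreal R"
      by (rule enn_step[OF e pm hm2 b _ key R0]) (auto simp: \<phi>_def)
    then show ?thesis unfolding \<phi>_def moment_def .
  qed
  have "(\<integral>\<^sup>+x. ennreal (h x) * ennreal (norm x ^ 2) \<partial>M) \<le> moment 2 M + ennreal R"
    by (rule trunc_lim[OF hm2 hm _ hnn bound]) simp
  then show ?thesis unfolding R_def E_def .
qed


lemma core:
  fixes \<zeta> p :: "'a::euclidean_space measure" and \<alpha> :: real
  assumes pz: "prob_space \<zeta>" and sz: "sets \<zeta> = sets borel" and pp: "prob_space p"
    and sp: "sets p = sets borel" and re: "rel_entropy p \<zeta> < \<infinity>" and a0: "\<alpha> > 0"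
  shows "moment 1 p \<le> moment 1 \<zeta> + C1 \<zeta> \<alpha> * ennreal (sqrt (real_of_ereal (rel_entropy p \<zeta>))) \<and>
         moment 2 p \<le> moment 2 \<zeta> + C2 \<zeta> \<alpha> *
           ennreal (sqrt (real_of_ereal (rel_entropy p \<zeta>)) + real_of_ereal (rel_entropy p \<zeta>) / 2)"
proof -
  interpret Z: prob_space \<zeta> by fact
  interpret P: prob_space p by fact
  have spz: "sets p = sets \<zeta>" using sp sz by simp
  from re have ac: "absolutely_continuous \<zeta> p"
    and li: "integrable p (\<lambda>x. ln (enn2real (RN_deriv \<zeta> p x)))"
    and reH: "rel_entropy p \<zeta> = ereal (\<integral>x. ln (enn2real (RN_deriv \<zeta> p x)) \<partial>p)"
    unfolding rel_entropy_def by (auto split: if_splits)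
  define h where "h = (\<lambda>x. enn2real (RN_deriv \<zeta> p x))"
  have hm[measurable]: "h \<in> borel_measurable \<zeta>" unfolding h_def by measurable
  have fin: "AE x in \<zeta>. RN_deriv \<zeta> p x \<noteq> \<infinity>"
    by (rule Z.RN_deriv_finite[OF P.sigma_finite_measure_axioms ac spz])
  have dens: "p = density \<zeta> (\<lambda>x. ennreal (h x))"
  proof -
    have "density \<zeta> (RN_deriv \<zeta> p) = p" by (rule Z.density_RN_deriv[OF ac spz])
    moreover have "density \<zeta> (RN_deriv \<zeta> p) = density \<zeta> (\<lambda>x. ennreal (h x))"
      by (rule density_cong) (use fin in \<open>auto simp: h_def less_top\<close>)
    ultimately show ?thesis by simp
  qed
  have hnn: "\<And>x. 0 \<le> h x" unfolding h_def by simp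
  have mb: "f \<in> borel_measurable \<zeta>" if "f \<in> borel_measurable borel" for f :: "'a \<Rightarrow> real"
  proof -
    have "(borel_measurable \<zeta> :: ('a \<Rightarrow> real) set) = borel_measurable (borel::'a measure)"
      by (rule measurable_cong_sets[OF sz refl])
    then show ?thesis using that by simp
  qed
  have idens: "integrable p f \<longleftrightarrow> integrable \<zeta> (\<lambda>x. h x * f x)"
    if [measurable]: "f \<in> borel_measurable \<zeta>" for f :: "'a \<Rightarrow> real"
    using integrable_density[of f \<zeta> h] hnn by (simp add: dens[symmetric])
  have intdens: "(\<integral>x. f x \<partial>p) = (\<integral>x. h x * f x \<partial>\<zeta>)"
    if [measurable]: "f \<in> borel_measurable \<zeta>" for f :: "'a \<Rightarrow> real"
    using integral_density[of f \<zeta> h] hnn by (simp add: dens[symmetric])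
  have hint: "integrable \<zeta> h" using idens[of "\<lambda>_. 1"] by simp
  have Pm: "measure p (space p) = 1"
    using P.emeasure_space_1 by (simp add: measure_eq_emeasure_eq_ennreal)
  have h1: "(\<integral>x. h x \<partial>\<zeta>) = 1" using intdens[of "\<lambda>_. 1"] Pm by simp
  have lm: "(\<lambda>x. ln (h x)) \<in> borel_measurable \<zeta>" by measurable
  have hl: "integrable \<zeta> (\<lambda>x. h x * ln (h x))" using idens[OF lm] li unfolding h_def by simp
  interpret E: ent \<zeta> h
    by unfold_locales (use hnn hint h1 hl in auto)
  have HH: "real_of_ereal (rel_entropy p \<zeta>) = E.Hh"
    unfolding reH E.Hh_def using intdens[OF lm] unfolding h_def by simp
  have mom: "moment k p = (\<integral>\<^sup>+x. ennreal (h x) * ennreal (norm x ^ k) \<partial>\<zeta>)" for k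
  proof -
    have nm: "(\<lambda>x::'a. norm x ^ k) \<in> borel_measurable \<zeta>" by (rule mb) measurable
    show ?thesis unfolding moment_def
      by (subst dens) (simp add: nn_integral_density nm)
  qed
  show ?thesis
  proof (cases "E.Hh = 0")
    case True
    have "AE x in \<zeta>. h x = 1" by (rule E.Hh0_AE[OF True])
    then have mk: "moment k p = moment k \<zeta>" for k
    proof -
      assume ae: "AE x in \<zeta>. h x = 1"
      have "moment k p = (\<integral>\<^sup>+x. ennreal (h x) * ennreal (norm x ^ k) \<partial>\<zeta>)" by (rule mom)
      also have "\<dots> = (\<integral>\<^sup>+x. ennreal (norm x ^ k) \<partial>\<zeta>)"
        by (rule nn_integral_cong_AE) (use ae in auto)
      finally show ?thesis unfolding moment_def .
    qed
    show ?thesis unfolding mk by simp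
  next
    case False
    then have Hp: "E.Hh > 0" using E.Hh_nonneg by simp
    have S: "{0<..<\<alpha>/2} \<noteq> {}" using a0 by (auto intro!: exI[of _ "\<alpha>/4"])
    have part1: "moment 1 p \<le> moment 1 \<zeta> + C1 \<zeta> \<alpha> * ennreal (sqrt E.Hh)"
      unfolding C1_def
    proof (rule INF_bound[OF S])
      fix \<sigma> assume "\<sigma> \<in> {0<..<\<alpha>/2}"
      then have s: "\<sigma> > 0" by simp
      show "moment 1 p \<le> moment 1 \<zeta> + (if exp_moment \<zeta> \<sigma> = \<infinity> then \<infinity>
             else ennreal (sqrt (2/\<sigma> + 2/\<sigma> * ln (enn2real (exp_moment \<zeta> \<sigma>))))) * ennreal (sqrt E.Hh)"
      proof (cases "exp_moment \<zeta> \<sigma> = \<infinity>")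
        case True
        then show ?thesis using Hp by (simp add: ennreal_top_mult)
      next
        case False
        then show ?thesis unfolding mom using M1_enn[OF E.ent_axioms sz s False] by simp
      qed
    qed
    have part2: "moment 2 p \<le> moment 2 \<zeta> + C2 \<zeta> \<alpha> * ennreal (sqrt E.Hh + E.Hh / 2)"
      unfolding C2_def
    proof (rule INF_bound[OF S])
      fix \<sigma> assume "\<sigma> \<in> {0<..<\<alpha>/2}"
      then have s: "\<sigma> > 0" by simp
      show "moment 2 p \<le> moment 2 \<zeta> + (ennreal (3/\<sigma>) + ennreal (2/\<sigma>) * exp_moment \<zeta> \<sigma>) * ennreal (sqrt E.Hh + E.Hh / 2)"
      proof (cases "exp_moment \<zeta> \<sigma> = \<infinity>")
        case True
        have "sqrt E.Hh + E.Hh / 2 > 0" using Hp by (intro add_pos_pos) auto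
        then show ?thesis using True s by (simp add: ennreal_top_mult ennreal_mult_top)
      next
        case False
        define E where "E = enn2real (exp_moment \<zeta> \<sigma>)"
        have EE: "exp_moment \<zeta> \<sigma> = ennreal E" unfolding E_def using False by (simp add: less_top)
        have E0: "E \<ge> 0" unfolding E_def by simp
        have "(ennreal (3/\<sigma>) + ennreal (2/\<sigma>) * exp_moment \<zeta> \<sigma>) * ennreal (sqrt E.Hh + E.Hh / 2)
              = ennreal ((3/\<sigma> + 2/\<sigma> * E) * (sqrt E.Hh + E.Hh / 2))"
        proof -
          have a: "ennreal (2/\<sigma>) * ennreal E = ennreal (2/\<sigma>*E)"
            by (rule ennreal_mult[symmetric]) (use s E0 in auto)
          have b: "ennreal (3/\<sigma>) + ennreal (2/\<sigma>*E) = ennreal (3/\<sigma> + 2/\<sigma>*E)"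
            by (rule ennreal_plus[symmetric]) (use s E0 in auto)
          have c: "ennreal (3/\<sigma> + 2/\<sigma>*E) * ennreal (sqrt E.Hh + E.Hh / 2)
                 = ennreal ((3/\<sigma> + 2/\<sigma> * E) * (sqrt E.Hh + E.Hh / 2))"
            by (rule ennreal_mult[symmetric]) (use s E0 E.Hh_nonneg in auto)
          show ?thesis unfolding EE a b c ..
        qed
        then show ?thesis unfolding mom using M2_enn[OF E.ent_axioms sz s False] unfolding E_def by simp
      qed
    qed
    show ?thesis unfolding HH using part1 part2 by simp
  qed
qed

theorem lemma27:
  fixes \<mu> \<nu> \<zeta> :: "'a::euclidean_space measure"
    and U\<^sub>\<mu> U\<^sub>\<nu> :: "'a \<Rightarrow> real" and \<alpha>\<^sub>\<mu> \<alpha>\<^sub>\<nu> \<alpha> :: real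
    and p :: "'a measure"
  assumes "A1_measure \<mu> U\<^sub>\<mu> \<alpha>\<^sub>\<mu>" and "A1_measure \<nu> U\<^sub>\<nu> \<alpha>\<^sub>\<nu>"
    and "(\<zeta>, \<alpha>) \<in> {(\<mu>, \<alpha>\<^sub>\<mu>), (\<nu>, \<alpha>\<^sub>\<nu>)}"
    and "prob_space p" and "sets p = sets borel"
    and "rel_entropy p \<zeta> < \<infinity>"
  shows "moment 1 p \<le> moment 1 \<zeta> + C1 \<zeta> \<alpha> * ennreal (sqrt (real_of_ereal (rel_entropy p \<zeta>))) \<and>
         moment 2 p \<le> moment 2 \<zeta> + C2 \<zeta> \<alpha> *
           ennreal (sqrt (real_of_ereal (rel_entropy p \<zeta>)) + real_of_ereal (rel_entropy p \<zeta>) / 2)"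
proof -
  obtain U where A: "A1_measure \<zeta> U \<alpha>" using assms(1,2,3) by auto
  then have d: "\<zeta> = density lborel (\<lambda>x. ennreal (exp (- U x)))" and pz: "prob_space \<zeta>" and a0: "\<alpha> > 0"
    unfolding A1_measure_def by auto
  have sz: "sets \<zeta> = sets borel" by (subst d) simp
  show ?thesis by (rule core[OF pz sz assms(4,5,6) a0])
qed


end
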